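(* For every $n\geq1$, \[ \lvert eNNC_{2n}\rvert=\sum_{j=0}^{n}(-1)^j\binom{n}{j}\lvert NNC_{2n-j}\rvert. \]
   Context: For $m\geq0$, a non-exhaustive non-crossing partition of $[m]=\{1,\dots,m\}$ is a collection $\mathcal{P}$ of pairwise disjoint nonempty subsets (blocks) of $[m]$, not necessarily covering $[m]$ (the empty collection is allowed), such that whenever $1\leq i<k<j<l\leq m$ with $i,j$ in a block $B$ and $k,l$ in a block $B'$, then $B=B'$. $NNC_m$ denotes the set of these. $eNNC_{2n}\subseteq NNC_{2n}$ is the set of those partitions of $[2n]$ that contain no block of the form $\{i\}$ with $i$ even. *)

theory Defs
  imports Main
begin

definition NNC :: "nat \<Rightarrow> nat set set set" where
  "NNC m = {P. (\<forall>B\<in>P. B \<noteq> {} \<and> B \<subseteq> {1..m})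
              \<and> (\<forall>B\<in>P. \<forall>B'\<in>P. B \<noteq> B' \<longrightarrow> B \<inter> B' = {})
              \<and> (\<forall>B\<in>P. \<forall>B'\<in>P. \<forall>i k j l. 1 \<le> i \<and> i < k \<and> k < j \<and> j < l \<and> l \<le> m
                    \<and> i \<in> B \<and> j \<in> B \<and> k \<in> B' \<and> l \<in> B' \<longrightarrow> B = B')}"

definition eNNC :: "nat \<Rightarrow> nat set set set" where
  "eNNC n = {P \<in> NNC (2 * n). \<forall>i. even i \<longrightarrow> {i} \<notin> P}"

end

theory Submission
  imports Defs
begin

definition NNCon :: "nat set \<Rightarrow> nat set set set" where
  "NNCon X = {P. (\<forall>B\<in>P. B \<noteq> {} \<and> B \<subseteq> X)
              \<and> (\<forall>B\<in>P. \<forall>B'\<in>P. B \<noteq> B' \<longrightarrow> B \<inter> B' = {})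
              \<and> (\<forall>B\<in>P. \<forall>B'\<in>P. \<forall>i k j l. i < k \<and> k < j \<and> j < l
                    \<and> i \<in> B \<and> j \<in> B \<and> k \<in> B' \<and> l \<in> B' \<longrightarrow> B = B')}"

lemma NNC_eq: "NNC m = NNCon {1..m}"
proof (rule set_eqI)
  fix P
  show "P \<in> NNC m \<longleftrightarrow> P \<in> NNCon {1..m}"
  proof
    assume h: "P \<in> NNC m"
    have a: "\<forall>B\<in>P. B \<noteq> {} \<and> B \<subseteq> {1..m}"
      and b: "\<forall>B\<in>P. \<forall>B'\<in>P. B \<noteq> B' \<longrightarrow> B \<inter> B' = {}"
      and c: "\<forall>B\<in>P. \<forall>B'\<in>P. \<forall>i k j l. 1 \<le> i \<and> i < k \<and> k < j \<and> j < l \<and> l \<le> m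
                    \<and> i \<in> B \<and> j \<in> B \<and> k \<in> B' \<and> l \<in> B' \<longrightarrow> B = B'"
      using h unfolding NNC_def mem_Collect_eq by (rule conjunct1, rule conjunct1[OF conjunct2], rule conjunct2[OF conjunct2])
    have c': "\<forall>B\<in>P. \<forall>B'\<in>P. \<forall>i k j l. i < k \<and> k < j \<and> j < l
                    \<and> i \<in> B \<and> j \<in> B \<and> k \<in> B' \<and> l \<in> B' \<longrightarrow> B = B'"
    proof (intro ballI allI impI)
      fix B B' i k j l
      assume BB: "B \<in> P" "B' \<in> P" and q: "i < k \<and> k < j \<and> j < l
                    \<and> i \<in> B \<and> j \<in> B \<and> k \<in> B' \<and> l \<in> B'"
      have "i \<in> {1..m}" "l \<in> {1..m}" using a BB q by blast+
      then have "1 \<le> i" "l \<le> m" by auto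
      then show "B = B'" using q c[THEN bspec, OF BB(1), THEN bspec, OF BB(2), rule_format, of i k j l] by simp
    qed
    show "P \<in> NNCon {1..m}" unfolding NNCon_def mem_Collect_eq using a b c' by (intro conjI)
  next
    assume h: "P \<in> NNCon {1..m}"
    have a: "\<forall>B\<in>P. B \<noteq> {} \<and> B \<subseteq> {1..m}"
      and b: "\<forall>B\<in>P. \<forall>B'\<in>P. B \<noteq> B' \<longrightarrow> B \<inter> B' = {}"
      and c: "\<forall>B\<in>P. \<forall>B'\<in>P. \<forall>i k j l. i < k \<and> k < j \<and> j < l
                    \<and> i \<in> B \<and> j \<in> B \<and> k \<in> B' \<and> l \<in> B' \<longrightarrow> B = B'"
      using h unfolding NNCon_def mem_Collect_eq by (rule conjunct1, rule conjunct1[OF conjunct2], rule conjunct2[OF conjunct2])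
    have c': "\<forall>B\<in>P. \<forall>B'\<in>P. \<forall>i k j l. 1 \<le> i \<and> i < k \<and> k < j \<and> j < l \<and> l \<le> m
                    \<and> i \<in> B \<and> j \<in> B \<and> k \<in> B' \<and> l \<in> B' \<longrightarrow> B = B'"
    proof (intro ballI allI impI)
      fix B B' i k j l
      assume BB: "B \<in> P" "B' \<in> P" and q: "1 \<le> i \<and> i < k \<and> k < j \<and> j < l \<and> l \<le> m
                    \<and> i \<in> B \<and> j \<in> B \<and> k \<in> B' \<and> l \<in> B'"
      then show "B = B'" using q c[THEN bspec, OF BB(1), THEN bspec, OF BB(2), rule_format, of i k j l] by simp
    qed
    show "P \<in> NNC m" unfolding NNC_def mem_Collect_eq using a b c' by (intro conjI)
  qed
qed

lemma finite_NNCon: "finite X \<Longrightarrow> finite (NNCon X)"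
  by (rule finite_subset[of _ "Pow (Pow X)"]) (auto simp: NNCon_def)

lemma transport:
  fixes X :: "nat set" and f :: "nat \<Rightarrow> nat"
  assumes sm: "strict_mono_on X f" and P: "P \<in> NNCon X"
  shows "(\<lambda>B. f ` B) ` P \<in> NNCon (f ` X)"
proof -
  have inj: "inj_on f X" using sm strict_mono_on_imp_inj_on by blast
  have sub: "\<And>B. B \<in> P \<Longrightarrow> B \<subseteq> X" using P by (auto simp: NNCon_def)
  have ne: "\<And>B. B \<in> P \<Longrightarrow> B \<noteq> {}" using P by (auto simp: NNCon_def)
  have dis: "\<And>B B'. B \<in> P \<Longrightarrow> B' \<in> P \<Longrightarrow> B \<noteq> B' \<Longrightarrow> B \<inter> B' = {}" using P by (auto simp: NNCon_def)
  have nc: "\<And>B B' i k j l. B \<in> P \<Longrightarrow> B' \<in> P \<Longrightarrow> i < k \<Longrightarrow> k < j \<Longrightarrow> j < l \<Longrightarrow>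
     i \<in> B \<Longrightarrow> j \<in> B \<Longrightarrow> k \<in> B' \<Longrightarrow> l \<in> B' \<Longrightarrow> B = B'"
  proof -
    fix B B' i k j l
    assume a: "B \<in> P" "B' \<in> P" "i < k" "k < j" "j < l" "i \<in> B" "j \<in> B" "k \<in> B'" "l \<in> B'"
    have "\<forall>B\<in>P. \<forall>B'\<in>P. \<forall>i k j l. i < k \<and> k < j \<and> j < l
                    \<and> i \<in> B \<and> j \<in> B \<and> k \<in> B' \<and> l \<in> B' \<longrightarrow> B = B'"
      using P unfolding NNCon_def mem_Collect_eq by (elim conjE)
    then show "B = B'" using a by meson
  qed
  show ?thesis
    unfolding NNCon_def
  proof (intro CollectI conjI ballI allI impI)
    fix C assume "C \<in> (\<lambda>B. f ` B) ` P"
    then obtain B where B: "B \<in> P" "C = f ` B" by blast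
    show "C \<noteq> {}" using ne B by auto
    show "C \<subseteq> f ` X" using sub B by auto
  next
    fix C C' assume "C \<in> (\<lambda>B. f ` B) ` P" "C' \<in> (\<lambda>B. f ` B) ` P" "C \<noteq> C'"
    then obtain B B' where B: "B \<in> P" "C = f ` B" "B' \<in> P" "C' = f ` B'" by blast
    with \<open>C \<noteq> C'\<close> have "B \<inter> B' = {}" using dis by blast
    then show "C \<inter> C' = {}" using B inj_on_image_Int[OF inj sub[OF B(1)] sub[OF B(3)]] by simp
  next
    fix C C' i k j l
    assume C: "C \<in> (\<lambda>B. f ` B) ` P" "C' \<in> (\<lambda>B. f ` B) ` P"
      and h: "i < k \<and> k < j \<and> j < l \<and> i \<in> C \<and> j \<in> C \<and> k \<in> C' \<and> l \<in> C'"
    obtain B where B1: "B \<in> P" "C = f ` B" using C(1) by blast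
    obtain B' where B2: "B' \<in> P" "C' = f ` B'" using C(2) by blast
    have B: "B \<in> P" "C = f ` B" "B' \<in> P" "C' = f ` B'" using B1 B2 by auto
    have "i \<in> f ` B" "j \<in> f ` B" "k \<in> f ` B'" "l \<in> f ` B'" using h B by auto
    then obtain a b c d where abcd: "a \<in> B" "b \<in> B" "c \<in> B'" "d \<in> B'"
      "i = f a" "j = f b" "k = f c" "l = f d" by (elim imageE) blast
    have X: "a \<in> X" "b \<in> X" "c \<in> X" "d \<in> X" using abcd B sub by auto
    have "f a < f c" "f c < f b" "f b < f d" using h abcd by auto
    then have "a < c" "c < b" "b < d"
      using strict_mono_on_less[OF sm X(1) X(3)] strict_mono_on_less[OF sm X(3) X(2)]
        strict_mono_on_less[OF sm X(2) X(4)] by auto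
    then have "B = B'" using nc[OF B(1) B(3)] abcd by blast
    then show "C = C'" using B by simp
  qed
qed


lemma card_NNCon_le:
  fixes X :: "nat set" and f :: "nat \<Rightarrow> nat"
  assumes fin: "finite X" and sm: "strict_mono_on X f"
  shows "card (NNCon X) \<le> card (NNCon (f ` X))"
proof (rule card_inj_on_le)
  have inj: "inj_on f X" using sm strict_mono_on_imp_inj_on by blast
  have "inj_on (image (image f)) (Pow (Pow X))"
    by (rule inj_on_image_Pow, rule inj_on_image_Pow, rule inj)
  moreover have "NNCon X \<subseteq> Pow (Pow X)" by (auto simp: NNCon_def)
  ultimately show "inj_on (image (image f)) (NNCon X)" by (rule inj_on_subset)
  show "image (image f) ` NNCon X \<subseteq> NNCon (f ` X)"
    by (rule image_subsetI, rule transport[OF sm])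
  show "finite (NNCon (f ` X))" using fin by (simp add: finite_NNCon)
qed

lemma inv_strict_mono:
  fixes X :: "nat set" and f :: "nat \<Rightarrow> nat"
  assumes sm: "strict_mono_on X f"
  shows "strict_mono_on (f ` X) (the_inv_into X f)"
proof (rule strict_mono_onI)
  have inj: "inj_on f X" using sm strict_mono_on_imp_inj_on by blast
  fix u v assume uv: "u \<in> f ` X" "v \<in> f ` X" "u < v"
  obtain a where a: "a \<in> X" "u = f a" using uv(1) by (rule imageE) simp
  obtain b where b: "b \<in> X" "v = f b" using uv(2) by (rule imageE) simp
  have "f a < f b" using uv(3) a(2) b(2) by simp
  then have "a < b" using strict_mono_on_less[OF sm a(1) b(1)] by simp
  moreover have "the_inv_into X f u = a" using a the_inv_into_f_f[OF inj] by simp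
  moreover have "the_inv_into X f v = b" using b the_inv_into_f_f[OF inj] by simp
  ultimately show "the_inv_into X f u < the_inv_into X f v" by simp
qed

lemma card_NNCon_eq:
  fixes X :: "nat set" and f :: "nat \<Rightarrow> nat"
  assumes fin: "finite X" and sm: "strict_mono_on X f"
  shows "card (NNCon X) = card (NNCon (f ` X))"
proof (rule antisym)
  show "card (NNCon X) \<le> card (NNCon (f ` X))" by (rule card_NNCon_le[OF fin sm])
  have inj: "inj_on f X" using sm strict_mono_on_imp_inj_on by blast
  have "card (NNCon (f ` X)) \<le> card (NNCon (the_inv_into X f ` (f ` X)))"
    by (rule card_NNCon_le[OF finite_imageI[OF fin] inv_strict_mono[OF sm]])
  then show "card (NNCon (f ` X)) \<le> card (NNCon X)"
    using the_inv_into_onto[OF inj] by simp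
qed

lemma card_NNCon:
  assumes fin: "finite X"
  shows "card (NNCon X) = card (NNC (card X))"
proof -
  define f where "f = (\<lambda>i. Suc (card {x\<in>X. x < i}))"
  have sm: "strict_mono_on X f"
  proof (rule strict_mono_onI)
    fix a b assume ab: "a \<in> X" "b \<in> X" "a < b"
    have "{x\<in>X. x < a} \<subset> {x\<in>X. x < b}" using ab by auto
    then have "card {x\<in>X. x < a} < card {x\<in>X. x < b}"
      by (rule psubset_card_mono[rotated]) (simp add: fin)
    then show "f a < f b" by (simp add: f_def)
  qed
  have inj: "inj_on f X" using sm strict_mono_on_imp_inj_on by blast
  have sub: "f ` X \<subseteq> {1..card X}"
  proof
    fix y assume "y \<in> f ` X"
    then obtain a where a: "a \<in> X" "y = f a" by blast
    have "{x\<in>X. x < a} \<subset> X" using a by auto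
    then have "card {x\<in>X. x < a} < card X" by (rule psubset_card_mono[rotated]) (simp add: fin)
    then show "y \<in> {1..card X}" using a by (simp add: f_def)
  qed
  have "card (f ` X) = card {1..card X}" using card_image[OF inj] by simp
  then have "f ` X = {1..card X}" using card_subset_eq[OF _ sub] by simp
  then show ?thesis using card_NNCon_eq[OF fin sm] by (simp add: NNC_eq)
qed


lemma NNConI:
  assumes "\<And>B. B \<in> P \<Longrightarrow> B \<noteq> {}" "\<And>B. B \<in> P \<Longrightarrow> B \<subseteq> X"
    "\<And>B B'. B \<in> P \<Longrightarrow> B' \<in> P \<Longrightarrow> B \<noteq> B' \<Longrightarrow> B \<inter> B' = {}"
    "\<And>B B' i k j l. B \<in> P \<Longrightarrow> B' \<in> P \<Longrightarrow> i < k \<Longrightarrow> k < j \<Longrightarrow> j < l \<Longrightarrow>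
     i \<in> B \<Longrightarrow> j \<in> B \<Longrightarrow> k \<in> B' \<Longrightarrow> l \<in> B' \<Longrightarrow> B = B'"
  shows "P \<in> NNCon X"
  unfolding NNCon_def mem_Collect_eq
proof (intro conjI ballI allI impI)
  fix B assume "B \<in> P" then show "B \<noteq> {}" "B \<subseteq> X" using assms(1,2) by auto
next
  fix B B' assume "B \<in> P" "B' \<in> P" "B \<noteq> B'" then show "B \<inter> B' = {}" using assms(3) by simp
next
  fix B B' i k j l assume "B \<in> P" "B' \<in> P"
    "i < k \<and> k < j \<and> j < l \<and> i \<in> B \<and> j \<in> B \<and> k \<in> B' \<and> l \<in> B'"
  then show "B = B'" using assms(4)[of B B' i k j l] by simp
qed

lemma NNCon_ne: "P \<in> NNCon X \<Longrightarrow> B \<in> P \<Longrightarrow> B \<noteq> {}"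
  unfolding NNCon_def by simp
lemma NNCon_sub: "P \<in> NNCon X \<Longrightarrow> B \<in> P \<Longrightarrow> B \<subseteq> X"
  unfolding NNCon_def by simp
lemma NNCon_dis: "P \<in> NNCon X \<Longrightarrow> B \<in> P \<Longrightarrow> B' \<in> P \<Longrightarrow> B \<noteq> B' \<Longrightarrow> B \<inter> B' = {}"
proof -
  assume h: "P \<in> NNCon X" and BB: "B \<in> P" "B' \<in> P" "B \<noteq> B'"
  have c: "\<forall>B\<in>P. \<forall>B'\<in>P. B \<noteq> B' \<longrightarrow> B \<inter> B' = {}"
    using h unfolding NNCon_def mem_Collect_eq by (rule conjunct1[OF conjunct2])
  show "B \<inter> B' = {}" using BB c by blast
qed
lemma NNCon_nc: "P \<in> NNCon X \<Longrightarrow> B \<in> P \<Longrightarrow> B' \<in> P \<Longrightarrow> i < k \<Longrightarrow> k < j \<Longrightarrow> j < l \<Longrightarrow>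
     i \<in> B \<Longrightarrow> j \<in> B \<Longrightarrow> k \<in> B' \<Longrightarrow> l \<in> B' \<Longrightarrow> B = B'"
proof -
  assume h: "P \<in> NNCon X" and BB: "B \<in> P" "B' \<in> P" and q: "i < k" "k < j" "j < l"
     "i \<in> B" "j \<in> B" "k \<in> B'" "l \<in> B'"
  have c: "\<forall>B\<in>P. \<forall>B'\<in>P. \<forall>i k j l. i < k \<and> k < j \<and> j < l
                    \<and> i \<in> B \<and> j \<in> B \<and> k \<in> B' \<and> l \<in> B' \<longrightarrow> B = B'"
    using h unfolding NNCon_def mem_Collect_eq by (rule conjunct2[OF conjunct2])
  show "B = B'" using q c[THEN bspec, OF BB(1), THEN bspec, OF BB(2), rule_format, of i k j l] by simp
qed

definition sing :: "nat set \<Rightarrow> nat set set" where "sing S = (\<lambda>i. {i}) ` S"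

lemma card_fix_sing:
  assumes S: "S \<subseteq> {1..m}"
  shows "card {P \<in> NNC m. sing S \<subseteq> P} = card (NNC (m - card S))"
proof -
  define X where "X = {1..m} - S"
  have finX: "finite X" by (simp add: X_def)
  have cX: "card X = m - card S" unfolding X_def using S
    by (simp add: card_Diff_subset finite_subset)
  have disj: "Q \<inter> sing S = {}" if Q: "Q \<in> NNCon X" for Q
  proof (rule ccontr)
    assume "Q \<inter> sing S \<noteq> {}"
    then obtain i where i: "i \<in> S" "{i} \<in> Q" unfolding sing_def by blast
    have "{i} \<subseteq> X" by (rule NNCon_sub[OF Q i(2)])
    then show False using i(1) by (simp add: X_def)
  qed
  have blk: "B \<noteq> {} \<and> B \<subseteq> {1..m}" if Q: "Q \<in> NNCon X" and B: "B \<in> Q \<union> sing S" for Q B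
  proof (cases "B \<in> Q")
    case True then show ?thesis using NNCon_ne[OF Q] NNCon_sub[OF Q] X_def by blast
  next
    case False
    then obtain i where "i \<in> S" "B = {i}" using B unfolding sing_def by blast
    then show ?thesis using S by auto
  qed
  have to: "Q \<union> sing S \<in> NNCon {1..m}" if Q: "Q \<in> NNCon X" for Q
  proof (rule NNConI)
    fix B assume "B \<in> Q \<union> sing S"
    then show "B \<noteq> {}" using blk[OF Q] by blast
  next
    fix B assume "B \<in> Q \<union> sing S"
    then show "B \<subseteq> {1..m}" using blk[OF Q] by blast
  next
    fix B B' assume B: "B \<in> Q \<union> sing S" "B' \<in> Q \<union> sing S" "B \<noteq> B'"
    show "B \<inter> B' = {}"
    proof (cases "B \<in> Q")
      case True
      show ?thesis
      proof (cases "B' \<in> Q")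
        case True2: True
        then show ?thesis using NNCon_dis[OF Q \<open>B \<in> Q\<close> True2 B(3)] by simp
      next
        case False
        then obtain i where i: "i \<in> S" "B' = {i}" using B(2) unfolding sing_def by blast
        have "B \<subseteq> X" by (rule NNCon_sub[OF Q True])
        then have "i \<notin> B" using i(1) X_def by auto
        then show ?thesis using i(2) by auto
      qed
    next
      case False
      then obtain i where i: "i \<in> S" "B = {i}" using B(1) unfolding sing_def by blast
      show ?thesis
      proof (cases "B' \<in> Q")
        case True2: True
        have "B' \<subseteq> X" by (rule NNCon_sub[OF Q True2])
        then have "i \<notin> B'" using i(1) X_def by auto
        then show ?thesis using i(2) by auto
      next
        case False2: False
        then obtain i' where i': "i' \<in> S" "B' = {i'}" using B(2) unfolding sing_def by blast
        then show ?thesis using i B(3) by auto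
      qed
    qed
  next
    fix B B' i k j l assume B: "B \<in> Q \<union> sing S" "B' \<in> Q \<union> sing S"
      and q: "i < k" "k < j" "j < l" "i \<in> B" "j \<in> B" "k \<in> B'" "l \<in> B'"
    have "B \<notin> sing S"
    proof
      assume "B \<in> sing S"
      then obtain x where "B = {x}" unfolding sing_def by blast
      then show False using q by auto
    qed
    moreover have "B' \<notin> sing S"
    proof
      assume "B' \<in> sing S"
      then obtain x where "B' = {x}" unfolding sing_def by blast
      then show False using q by auto
    qed
    ultimately have "B \<in> Q" "B' \<in> Q" using B by auto
    then show "B = B'" using NNCon_nc[OF Q _ _ q] by simp
  qed
  have bk: "P - sing S \<in> NNCon X" if P: "P \<in> NNCon {1..m}" and sub: "sing S \<subseteq> P" for P
  proof (rule NNConI)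
    fix B assume B: "B \<in> P - sing S"
    show "B \<noteq> {}" using NNCon_ne[OF P] B by auto
    have "B \<inter> S = {}"
    proof (rule ccontr)
      assume "B \<inter> S \<noteq> {}"
      then obtain i where i: "i \<in> B" "i \<in> S" by blast
      have si: "{i} \<in> P" using sub i(2) unfolding sing_def by blast
      have "B \<noteq> {i}" using B i(2) unfolding sing_def by blast
      then have "B \<inter> {i} = {}" using NNCon_dis[OF P _ si] B by simp
      then show False using i(1) by simp
    qed
    then show "B \<subseteq> X" using NNCon_sub[OF P] B X_def by auto
  next
    fix B B' assume "B \<in> P - sing S" "B' \<in> P - sing S" "B \<noteq> B'"
    then show "B \<inter> B' = {}" using NNCon_dis[OF P] by simp
  next
    fix B B' i k j l assume "B \<in> P - sing S" "B' \<in> P - sing S"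
      and q: "i < k" "k < j" "j < l" "i \<in> B" "j \<in> B" "k \<in> B'" "l \<in> B'"
    then show "B = B'" using NNCon_nc[OF P _ _ q] by simp
  qed
  have bij: "bij_betw (\<lambda>Q. Q \<union> sing S) (NNCon X) {P \<in> NNC m. sing S \<subseteq> P}"
  proof (rule bij_betw_byWitness[where f' = "\<lambda>P. P - sing S"])
    show "\<forall>a\<in>NNCon X. a \<union> sing S - sing S = a" using disj by blast
    show "\<forall>a'\<in>{P \<in> NNC m. sing S \<subseteq> P}. a' - sing S \<union> sing S = a'" by blast
    show "(\<lambda>Q. Q \<union> sing S) ` NNCon X \<subseteq> {P \<in> NNC m. sing S \<subseteq> P}"
      using to by (auto simp: NNC_eq)
    show "(\<lambda>P. P - sing S) ` {P \<in> NNC m. sing S \<subseteq> P} \<subseteq> NNCon X"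
      using bk by (auto simp: NNC_eq)
  qed
  have "card {P \<in> NNC m. sing S \<subseteq> P} = card (NNCon X)"
    using bij_betw_same_card[OF bij] by simp
  also have "\<dots> = card (NNC (m - card S))" using card_NNCon[OF finX] cX by simp
  finally show ?thesis .
qed


lemma alt_sum:
  assumes "finite (A :: nat set)"
  shows "(\<Sum>S\<in>Pow A. (-1::int) ^ card S) = (if A = {} then 1 else 0)"
proof (cases "A = {}")
  case True then show ?thesis by simp
next
  case False
  then have "{} \<subset> A" by blast
  from card_subsupersets_even_odd[OF assms this]
  have "card {x \<in> Pow A. even (card x)} = card {x \<in> Pow A. odd (card x)}"
    by (simp add: Pow_def)
  then have "(\<Sum>S\<in>Pow A. (-1::int) ^ card S) = 0"
    by (intro sum_alternating_cancels) (simp_all add: assms)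
  then show ?thesis using False by simp
qed

lemma int_card_filter:
  assumes "finite A"
  shows "int (card {x\<in>A. Q x}) = (\<Sum>x\<in>A. if Q x then 1 else 0)"
  using sum.inter_filter[OF assms, of "\<lambda>_. (1::int)" Q] by simp

lemma card_evens: "card {i \<in> {1..2*n}. even i} = (n::nat)"
proof -
  have "{i \<in> {1..2*n}. even i} = (\<lambda>k. 2*k) ` {1..n}"
  proof (rule set_eqI)
    fix x
    show "x \<in> {i \<in> {1..2*n}. even i} \<longleftrightarrow> x \<in> (\<lambda>k. 2*k) ` {1..n}"
    proof
      assume "x \<in> {i \<in> {1..2*n}. even i}"
      then obtain k where "x = 2*k" "1 \<le> x" "x \<le> 2*n" by (auto elim: evenE)
      then show "x \<in> (\<lambda>k. 2*k) ` {1..n}" by auto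
    next
      assume "x \<in> (\<lambda>k. 2*k) ` {1..n}"
      then show "x \<in> {i \<in> {1..2*n}. even i}" by auto
    qed
  qed
  moreover have "inj_on (\<lambda>k::nat. 2*k) {1..n}" by (auto simp: inj_on_def)
  ultimately show ?thesis by (simp add: card_image)
qed

theorem lemma4p11:
  fixes n :: nat
  assumes "n \<ge> 1"
  shows "int (card (eNNC n)) = (\<Sum>j=0..n. (-1)^j * int (n choose j) * int (card (NNC (2 * n - j))))"
proof -
  define N where "N = NNC (2*n)"
  define E where "E = {i \<in> {1..2*n}. even i}"
  define T where "T = (\<lambda>P::nat set set. {i. {i} \<in> P})"
  have finN: "finite N" unfolding N_def NNC_eq by (rule finite_NNCon) simp
  have finE: "finite E" unfolding E_def by simp
  have cE: "card E = n" unfolding E_def by (rule card_evens)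
  have sT: "S \<subseteq> T P \<longleftrightarrow> sing S \<subseteq> P" for S P
    unfolding T_def sing_def by auto
  have e1: "eNNC n = {P \<in> N. E \<inter> T P = {}}"
  proof (rule set_eqI)
    fix P
    show "P \<in> eNNC n \<longleftrightarrow> P \<in> {P \<in> N. E \<inter> T P = {}}"
    proof (cases "P \<in> N")
      case False then show ?thesis unfolding eNNC_def N_def by simp
    next
      case True
      then have P: "P \<in> NNCon {1..2*n}" unfolding N_def NNC_eq .
      have "(\<forall>i. even i \<longrightarrow> {i} \<notin> P) \<longleftrightarrow> E \<inter> T P = {}"
      proof
        assume "\<forall>i. even i \<longrightarrow> {i} \<notin> P"
        then show "E \<inter> T P = {}" unfolding E_def T_def by auto
      next
        assume h: "E \<inter> T P = {}"
        show "\<forall>i. even i \<longrightarrow> {i} \<notin> P"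
        proof (intro allI impI notI)
          fix i assume "even i" "{i} \<in> P"
          then have "{i} \<subseteq> {1..2*n}" using NNCon_sub[OF P] by blast
          then have "i \<in> E" using \<open>even i\<close> unfolding E_def by simp
          then show False using h \<open>{i} \<in> P\<close> unfolding T_def by blast
        qed
      qed
      then show ?thesis using True unfolding eNNC_def N_def by simp
    qed
  qed
  have "int (card (eNNC n)) = (\<Sum>P\<in>N. if E \<inter> T P = {} then 1 else 0)"
    unfolding e1 by (rule int_card_filter[OF finN])
  also have "\<dots> = (\<Sum>P\<in>N. \<Sum>S\<in>Pow E. if sing S \<subseteq> P then (-1::int) ^ card S else 0)"
  proof (rule sum.cong[OF refl])
    fix P
    have "(if E \<inter> T P = {} then 1 else 0) = (\<Sum>S\<in>Pow (E \<inter> T P). (-1::int) ^ card S)"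
      using alt_sum[of "E \<inter> T P"] finE by simp
    also have "Pow (E \<inter> T P) = {S \<in> Pow E. S \<subseteq> T P}" by auto
    also have "(\<Sum>S\<in>{S \<in> Pow E. S \<subseteq> T P}. (-1::int) ^ card S)
        = (\<Sum>S\<in>Pow E. if S \<subseteq> T P then (-1::int) ^ card S else 0)"
      by (rule sum.inter_filter) (simp add: finE)
    finally show "(if E \<inter> T P = {} then 1 else 0) =
        (\<Sum>S\<in>Pow E. if sing S \<subseteq> P then (-1::int) ^ card S else 0)"
      using sT by simp
  qed
  also have "\<dots> = (\<Sum>S\<in>Pow E. \<Sum>P\<in>N. if sing S \<subseteq> P then (-1::int) ^ card S else 0)"
    by (rule sum.swap)
  also have "\<dots> = (\<Sum>S\<in>Pow E. (-1::int) ^ card S * int (card (NNC (2*n - card S))))"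
  proof (rule sum.cong[OF refl])
    fix S assume "S \<in> Pow E"
    then have SE: "S \<subseteq> {1..2*n}" unfolding E_def by auto
    have "(\<Sum>P\<in>N. if sing S \<subseteq> P then (-1::int) ^ card S else 0)
        = (\<Sum>P\<in>{P\<in>N. sing S \<subseteq> P}. (-1::int) ^ card S)"
      by (rule sum.inter_filter[symmetric]) (rule finN)
    also have "\<dots> = (-1::int) ^ card S * int (card {P\<in>N. sing S \<subseteq> P})" by simp
    also have "card {P\<in>N. sing S \<subseteq> P} = card (NNC (2*n - card S))"
      unfolding N_def by (rule card_fix_sing[OF SE])
    finally show "(\<Sum>P\<in>N. if sing S \<subseteq> P then (-1::int) ^ card S else 0)
        = (-1::int) ^ card S * int (card (NNC (2*n - card S)))" .
  qed
  also have "\<dots> = (\<Sum>j\<in>{0..n}. \<Sum>S\<in>{S \<in> Pow E. card S = j}. (-1::int) ^ card S * int (card (NNC (2*n - card S))))"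
  proof (rule sum.group[symmetric])
    show "finite (Pow E)" using finE by simp
    show "finite {0..n}" by simp
    show "card ` Pow E \<subseteq> {0..n}" using finE cE card_mono[OF finE] by fastforce
  qed
  also have "\<dots> = (\<Sum>j=0..n. (-1)^j * int (n choose j) * int (card (NNC (2 * n - j))))"
  proof (rule sum.cong[OF refl])
    fix j
    have "(\<Sum>S\<in>{S \<in> Pow E. card S = j}. (-1::int) ^ card S * int (card (NNC (2*n - card S))))
        = (\<Sum>S\<in>{S \<in> Pow E. card S = j}. (-1::int) ^ j * int (card (NNC (2*n - j))))"
      by (rule sum.cong) auto
    also have "\<dots> = int (card {S \<in> Pow E. card S = j}) * ((-1::int) ^ j * int (card (NNC (2*n - j))))"
      by simp
    also have "card {S \<in> Pow E. card S = j} = n choose j"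
      using n_subsets[OF finE, of j] cE by (simp add: Pow_def)
    finally show "(\<Sum>S\<in>{S \<in> Pow E. card S = j}. (-1::int) ^ card S * int (card (NNC (2*n - card S))))
        = (-1)^j * int (n choose j) * int (card (NNC (2 * n - j)))" by simp
  qed
  finally show ?thesis .
qed

end
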